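(* Let $G$ be a graph on $n$ vertices with average degree $d$. Then for every $x>\lambda(G)$, \[ \chi_G(x)\le \frac{n(x+d)}{x^2-\lambda(G)^2}. \]
   Context: $\lambda(G)$ is the spectral radius of the adjacency matrix $A(G)$. For $x>\lambda(G)$, $\chi_G(x)=\mathbf{1}^{\mathrm T}(xI-A(G))^{-1}\mathbf{1}$ is the sum of all entries of $(xI-A(G))^{-1}$. The average degree is $d=2e(G)/n$. *)

theory Defs
  imports "HOL-Analysis.Analysis"
begin

text \<open>A finite simple graph on the vertex type 'n (n = CARD('n) vertices),
  given by a symmetric irreflexive adjacency relation.\<close>
definition simple_graph :: "('n::finite \<Rightarrow> 'n \<Rightarrow> bool) \<Rightarrow> bool" where
  "simple_graph E \<longleftrightarrow> (\<forall>u v. E u v \<longrightarrow> E v u) \<and> (\<forall>u. \<not> E u u)"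

definition edges :: "('n::finite \<Rightarrow> 'n \<Rightarrow> bool) \<Rightarrow> 'n set set" where
  "edges E = {{u, v} | u v. E u v}"

definition num_edges :: "('n::finite \<Rightarrow> 'n \<Rightarrow> bool) \<Rightarrow> nat" where
  "num_edges E = card (edges E)"

definition avg_degree :: "('n::finite \<Rightarrow> 'n \<Rightarrow> bool) \<Rightarrow> real" where
  "avg_degree E = 2 * real (num_edges E) / real CARD('n)"

definition adj_matrix :: "('n::finite \<Rightarrow> 'n \<Rightarrow> bool) \<Rightarrow> real^'n^'n" where
  "adj_matrix E = (\<chi> i j. if E i j then 1 else 0)"

text \<open>Eigenvalues of a real square matrix (real eigenvalues; adjacency matrices
  are symmetric, so all eigenvalues are real).\<close>
definition eigenvalues :: "real^'n^'n \<Rightarrow> real set" where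
  "eigenvalues A = {\<mu>. \<exists>v. v \<noteq> 0 \<and> A *v v = \<mu> *\<^sub>R v}"

definition spectral_radius :: "real^'n^'n \<Rightarrow> real" where
  "spectral_radius A = Max (abs ` eigenvalues A)"

definition lambda_G :: "('n::finite \<Rightarrow> 'n \<Rightarrow> bool) \<Rightarrow> real" where
  "lambda_G E = spectral_radius (adj_matrix E)"

text \<open>chi_G(x) = 1^T (xI - A(G))^{-1} 1, the sum of all entries of the inverse.\<close>
definition walk_gen :: "('n::finite \<Rightarrow> 'n \<Rightarrow> bool) \<Rightarrow> real \<Rightarrow> real" where
  "walk_gen E x = (let M = matrix_inv (x *\<^sub>R mat 1 - adj_matrix E) in
      \<Sum>i\<in>UNIV. \<Sum>j\<in>UNIV. M $ i $ j)"

end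

theory Submission
  imports Defs
begin

lemma sym_dot:
  fixes A :: "real^'n^'n"
  assumes "transpose A = A"
  shows "x \<bullet> (A *v y) = (A *v x) \<bullet> y"
  by (metis assms dot_lmul_matrix transpose_matrix_vector)

lemma mv_scaleR: "(A::real^'n^'m) *v (c *\<^sub>R x) = c *\<^sub>R (A *v x)"
  by (simp add: vec_eq_iff matrix_vector_mult_def scaleR_sum_right sum_distrib_left algebra_simps)

lemma mv_add: "(A::real^'n^'m) *v (x + y) = A *v x + A *v y"
  by (simp add: matrix_vector_right_distrib)

lemma quad_scale: "(c *\<^sub>R w) \<bullet> ((B::real^'n^'n) *v (c *\<^sub>R w)) = c * c * (w \<bullet> (B *v w))"
  by (simp add: mv_scaleR)

lemma cont_quad: "continuous_on S (\<lambda>w. w \<bullet> ((B::real^'n^'n) *v w))"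
  by (intro continuous_intros linear_continuous_on matrix_vector_mul_linear)

lemma psd_zero:
  fixes a b :: real
  assumes "\<And>t. 0 \<le> 2 * t * a + t * t * b" "a \<ge> 0"
  shows "a = 0"
proof (rule ccontr)
  assume "a \<noteq> 0" then have a: "a > 0" using assms by auto
  show False
  proof (cases "b \<le> 0")
    case True
    then show False using assms(1)[of "-1"] a by auto
  next
    case False
    have h: "0 \<le> 2 * (-a/b) * a + (-a/b)*(-a/b)*b" by (rule assms(1))
    have "2 * (-a/b) * a + (-a/b)*(-a/b)*b = - (a*a/b)" using False by (simp add: field_simps)
    moreover have "a*a/b > 0" using False a by simp
    ultimately show False using h by linarith
  qed
qed

lemma rayleigh_max:
  fixes B :: "real^'n^'n"
  assumes sym: "transpose B = B"
  shows "\<exists>v \<mu>. v \<noteq> 0 \<and> B *v v = \<mu> *\<^sub>R v \<and> (\<forall>w. w \<bullet> (B *v w) \<le> \<mu> * (w \<bullet> w))"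
proof -
  define q where "q w = w \<bullet> (B *v w)" for w
  define S where "S = sphere (0::real^'n) 1"
  obtain k :: 'n where True by auto
  have "axis k (1::real) \<in> S" unfolding S_def by (simp add: norm_axis_1)
  then have Sne: "S \<noteq> {}" by auto
  have "compact (q ` S)" unfolding S_def q_def
    by (intro compact_continuous_image cont_quad compact_sphere)
  then obtain m where m: "m \<in> q ` S" "\<forall>t\<in>q ` S. t \<le> m"
    using compact_attains_sup[of "q ` S"] Sne by blast
  then obtain v where v: "v \<in> S" "q v = m" by auto
  have nv: "norm v = 1" using v unfolding S_def by simp
  then have vv: "v \<bullet> v = 1" by (simp add: dot_square_norm)
  have bound: "q w \<le> m * (w \<bullet> w)" for w
  proof (cases "w = 0")
    case True then show ?thesis by (simp add: q_def)
  next
    case False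
    define c where "c = inverse (norm w)"
    have c: "c > 0" using False unfolding c_def by simp
    have "c *\<^sub>R w \<in> S" unfolding S_def c_def using False by simp
    then have "q (c *\<^sub>R w) \<le> m" using m by auto
    moreover have "q (c *\<^sub>R w) = c * c * q w" unfolding q_def by (rule quad_scale)
    ultimately have "c * c * q w \<le> m" by simp
    moreover have "c * c * (w \<bullet> w) = 1" unfolding c_def using False
      by (simp add: dot_square_norm power2_eq_square field_simps)
    ultimately have "c * c * q w \<le> m * (c * c * (w \<bullet> w))" by simp
    then show ?thesis using c by (simp add: mult.assoc[symmetric] mult.commute[of m])
  qed
  define r where "r = m *\<^sub>R v - B *v v"
  define f where "f w = m * (w \<bullet> w) - q w" for w
  have f0: "f w \<ge> 0" for w using bound[of w] unfolding f_def by simp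
  have fv: "f v = 0" unfolding f_def using v vv by simp
  have exp: "f (v + t *\<^sub>R r) = 2 * t * (r \<bullet> r) + t * t * f r" for t
  proof -
    have s: "v \<bullet> (B *v r) = r \<bullet> (B *v v)" using sym_dot[OF sym, of v r] by (simp add: inner_commute)
    have "f (v + t *\<^sub>R r) = f v + 2 * t * (m * (v \<bullet> r) - r \<bullet> (B *v v)) + t * t * f r"
      unfolding f_def q_def using s
      by (simp add: mv_add mv_scaleR inner_add_left inner_add_right inner_commute algebra_simps)
    also have "m * (v \<bullet> r) - r \<bullet> (B *v v) = r \<bullet> r"
      unfolding r_def by (simp add: inner_diff_left inner_diff_right inner_commute algebra_simps)
    finally show ?thesis using fv by simp
  qed
  have "r \<bullet> r = 0"
    by (rule psd_zero[of _ "f r"]) (metis f0 exp, simp)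
  then have "B *v v = m *\<^sub>R v" unfolding r_def by simp
  moreover have "v \<noteq> 0" using nv by auto
  ultimately show ?thesis using bound unfolding q_def by blast
qed

lemma mv_neg: "(- (A::real^'n^'m)) *v x = - (A *v x)"
  by (simp add: vec_eq_iff matrix_vector_mult_def sum_negf)

lemma eig_finite:
  fixes A :: "real^'n^'n"
  assumes sym: "transpose A = A"
  shows "finite (eigenvalues A)"
proof -
  define ev where "ev \<mu> = (SOME v. v \<noteq> 0 \<and> A *v v = \<mu> *\<^sub>R v)" for \<mu>
  have ev: "ev \<mu> \<noteq> 0 \<and> A *v ev \<mu> = \<mu> *\<^sub>R ev \<mu>" if "\<mu> \<in> eigenvalues A" for \<mu>
  proof -
    have "\<exists>v. v \<noteq> 0 \<and> A *v v = \<mu> *\<^sub>R v" using that unfolding eigenvalues_def by blast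
    then show ?thesis unfolding ev_def by (rule someI_ex)
  qed
  have inj: "inj_on ev (eigenvalues A)"
  proof (rule inj_onI)
    fix a b assume a: "a \<in> eigenvalues A" and b: "b \<in> eigenvalues A" and e: "ev a = ev b"
    have "a *\<^sub>R ev a = A *v ev a" using ev[OF a] by simp
    also have "\<dots> = A *v ev b" using e by simp
    also have "\<dots> = b *\<^sub>R ev b" using ev[OF b] by simp
    finally have "a *\<^sub>R ev a = b *\<^sub>R ev a" using e by simp
    then have "(a - b) *\<^sub>R ev a = 0" by (simp add: scaleR_diff_left)
    then show "a = b" using ev[OF a] by simp
  qed
  have orth: "pairwise orthogonal (ev ` eigenvalues A)"
  proof (clarsimp simp: pairwise_def)
    fix a b assume a: "a \<in> eigenvalues A" and b: "b \<in> eigenvalues A" and ne: "ev a \<noteq> ev b"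
    from ne have "a \<noteq> b" by blast
    have "a * (ev a \<bullet> ev b) = (A *v ev a) \<bullet> ev b" using ev[OF a] by (simp only: inner_scaleR_left)
    also have "\<dots> = ev a \<bullet> (A *v ev b)" using sym_dot[OF sym] by simp
    also have "\<dots> = b * (ev a \<bullet> ev b)" using ev[OF b] by (simp only: inner_scaleR_right)
    finally have "(a - b) * (ev a \<bullet> ev b) = 0" by (simp add: algebra_simps)
    then show "orthogonal (ev a) (ev b)" using \<open>a \<noteq> b\<close> unfolding orthogonal_def by simp
  qed
  have "0 \<notin> ev ` eigenvalues A" using ev by auto
  then have "independent (ev ` eigenvalues A)" using orth pairwise_orthogonal_independent by blast
  then have "finite (ev ` eigenvalues A)" using independent_bound by blast
  then show ?thesis using inj finite_imageD by blast
qed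

lemma spec_facts:
  fixes A :: "real^'n^'n"
  assumes sym: "transpose A = A"
  defines "L \<equiv> spectral_radius A"
  shows "L \<ge> 0" "\<And>w. - L * (w \<bullet> w) \<le> w \<bullet> (A *v w)"
    "\<And>w. (A *v w) \<bullet> (A *v w) \<le> L\<^sup>2 * (w \<bullet> w)"
proof -
  have fin: "finite (abs ` eigenvalues A)" using eig_finite[OF sym] by simp
  have le: "\<bar>\<mu>\<bar> \<le> L" if "\<mu> \<in> eigenvalues A" for \<mu>
    unfolding L_def spectral_radius_def using fin that by (simp add: Max_ge)
  have mem: "\<mu> \<in> eigenvalues A" if "v \<noteq> 0" "A *v v = \<mu> *\<^sub>R v" for v \<mu>
    unfolding eigenvalues_def using that by blast
  have symn: "transpose (- A) = - A" using sym by (simp add: transpose_def vec_eq_iff)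
  obtain v \<mu> where v: "v \<noteq> 0" "(- A) *v v = \<mu> *\<^sub>R v" and b: "\<forall>w. w \<bullet> ((- A) *v w) \<le> \<mu> * (w \<bullet> w)"
    using rayleigh_max[OF symn] by blast
  have "- (A *v v) = \<mu> *\<^sub>R v" using v(2) by (simp add: mv_neg)
  then have "A *v v = - (\<mu> *\<^sub>R v)" by (metis minus_minus)
  then have "A *v v = (- \<mu>) *\<^sub>R v" by simp
  then have mu: "\<bar>- \<mu>\<bar> \<le> L" using le mem v(1) by blast
  then show "L \<ge> 0" by linarith
  show "- L * (w \<bullet> w) \<le> w \<bullet> (A *v w)" for w
  proof -
    have "w \<bullet> w \<ge> 0" by simp
    then have "\<mu> * (w \<bullet> w) \<le> L * (w \<bullet> w)" using mu by (intro mult_right_mono) auto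
    then show ?thesis using b[rule_format, of w] by (simp add: mv_neg)
  qed
  have symsq: "transpose (A ** A) = A ** A" using sym by (simp add: matrix_transpose_mul)
  obtain u \<nu> where u: "u \<noteq> 0" "(A ** A) *v u = \<nu> *\<^sub>R u" and b2: "\<forall>w. w \<bullet> ((A ** A) *v w) \<le> \<nu> * (w \<bullet> w)"
    using rayleigh_max[OF symsq] by blast
  have sq: "w \<bullet> ((A ** A) *v w) = (A *v w) \<bullet> (A *v w)" for w
    using sym_dot[OF sym, of w "A *v w"] by (simp add: matrix_vector_mul_assoc[symmetric])
  have Au: "A *v (A *v u) = \<nu> *\<^sub>R u" using u(2) by (simp add: matrix_vector_mul_assoc)
  have "\<nu> * (u \<bullet> u) = (A *v u) \<bullet> (A *v u)" using sq[of u] u(2) by simp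
  moreover have "u \<bullet> u > 0" using u(1) by simp
  ultimately have nu0: "\<nu> \<ge> 0" by (metis inner_ge_zero zero_le_mult_iff not_le)
  define s where "s = sqrt \<nu>"
  have s0: "s \<ge> 0" and ss: "s * s = \<nu>" unfolding s_def using nu0 by auto
  define z where "z = A *v u + s *\<^sub>R u"
  have Az: "A *v z = s *\<^sub>R z" unfolding z_def
    by (simp add: mv_add mv_scaleR Au ss[symmetric] scaleR_add_right)
  have sL: "s \<le> L"
  proof (cases "z = 0")
    case True
    then have "A *v u = (- s) *\<^sub>R u" unfolding z_def by (simp add: eq_neg_iff_add_eq_0)
    then have "- s \<in> eigenvalues A" using mem u(1) by blast
    then show ?thesis using le[of "- s"] s0 by simp
  next
    case False
    then have "s \<in> eigenvalues A" using mem Az by blast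
    then show ?thesis using le[of s] s0 by simp
  qed
  have nuL: "\<nu> \<le> L\<^sup>2" 
  proof -
    have "s * s \<le> L * L" by (rule mult_mono[OF sL sL]) (use s0 sL in auto)
    then show ?thesis using ss by (simp add: power2_eq_square)
  qed
  show "(A *v w) \<bullet> (A *v w) \<le> L\<^sup>2 * (w \<bullet> w)" for w
  proof -
    have "w \<bullet> w \<ge> 0" by simp
    then have "\<nu> * (w \<bullet> w) \<le> L\<^sup>2 * (w \<bullet> w)" using nuL by (intro mult_right_mono) auto
    then show ?thesis using b2[rule_format, of w] sq[of w] by simp
  qed
qed

lemma card_pairs:
  fixes E :: "'n::finite \<Rightarrow> 'n \<Rightarrow> bool"
  assumes g: "simple_graph E"
  shows "card {(i, j). E i j} = 2 * num_edges E"
proof -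
  define P where "P = {(i, j). E i j}"
  define f where "f = (\<lambda>(i::'n, j). {i, j})"
  have ed: "edges E = f ` P" unfolding edges_def f_def P_def by auto
  have fib: "card {p \<in> P. f p = e} = 2" if ee: "e \<in> f ` P" for e
  proof -
    obtain a b where ab: "E a b" "e = {a, b}" using ee unfolding P_def f_def by fastforce
    have "a \<noteq> b" using g ab unfolding simple_graph_def by auto
    have "{p \<in> P. f p = e} = {(a, b), (b, a)}"
      using ab g unfolding P_def f_def simple_graph_def by (auto simp: doubleton_eq_iff)
    then show ?thesis using \<open>a \<noteq> b\<close> by simp
  qed
  have "card P = (\<Sum>p\<in>P. 1)" by simp
  also have "\<dots> = (\<Sum>e\<in>f ` P. \<Sum>p\<in>{p \<in> P. f p = e}. 1)"
    by (rule sum.image_gen) simp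
  also have "\<dots> = (\<Sum>e\<in>f ` P. 2)" using fib by (intro sum.cong) auto
  finally have "card P = 2 * card (f ` P)" by simp
  then show ?thesis using ed unfolding num_edges_def P_def by simp
qed

lemma mat_scale_mv: "((x::real) *\<^sub>R mat 1) *v (v::real^'n) = x *\<^sub>R v"
proof -
  have "((x::real) *\<^sub>R mat 1) *v (v::real^'n) = x *\<^sub>R (mat 1 *v v)"
    by (simp add: vec_eq_iff matrix_vector_mult_def scaleR_sum_right sum_distrib_left algebra_simps)
  then show ?thesis by simp
qed

theorem lemma3p3:
  fixes E :: "'n::finite \<Rightarrow> 'n \<Rightarrow> bool" and x :: real
  assumes "simple_graph E"
    and "x > lambda_G E"
  shows "walk_gen E x \<le>
    real CARD('n) * (x + avg_degree E) / (x\<^sup>2 - (lambda_G E)\<^sup>2)"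
proof -
  define A where "A = adj_matrix E"
  define L where "L = lambda_G E"
  have sym: "transpose A = A" using assms(1)
    unfolding A_def adj_matrix_def transpose_def simple_graph_def by (auto simp: vec_eq_iff)
  have L: "L = spectral_radius A" unfolding L_def lambda_G_def A_def by simp
  note sf = spec_facts[OF sym, folded L]
  have xL: "x > L" using assms(2) L_def by simp
  define M where "M = x *\<^sub>R mat 1 - A"
  have Mv: "M *v v = x *\<^sub>R v - A *v v" for v
    unfolding M_def by (simp add: matrix_vector_mult_diff_rdistrib mat_scale_mv)
  have ker: "\<forall>v. M *v v = 0 \<longrightarrow> v = 0"
  proof (intro allI impI)
    fix v assume "M *v v = 0"
    then have Av: "A *v v = x *\<^sub>R v" using Mv by simp
    show "v = 0"
    proof (rule ccontr)
      assume "v \<noteq> 0"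
      then have "x \<in> eigenvalues A" unfolding eigenvalues_def using Av by blast
      then have "\<bar>x\<bar> \<le> L" unfolding L spectral_radius_def
        using eig_finite[OF sym] by (simp add: Max_ge)
      then show False using xL by simp
    qed
  qed
  then have "invertible M" using invertible_left_inverse matrix_left_invertible_ker by blast
  then have "\<exists>A'. M ** A' = mat 1 \<and> A' ** M = mat 1" unfolding invertible_def .
  then have MM: "M ** matrix_inv M = mat 1" unfolding matrix_inv_def by (metis (mono_tags, lifting) someI_ex)
  define one where "one = ((\<chi> i. 1) :: real^'n)"
  define u where "u = matrix_inv M *v one"
  have wg: "walk_gen E x = one \<bullet> u"
    unfolding walk_gen_def u_def one_def Let_def M_def A_def
    by (simp add: inner_vec_def matrix_vector_mult_def)
  have "M *v u = one" unfolding u_def by (simp add: matrix_vector_mul_assoc MM)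
  then have one_eq: "one = x *\<^sub>R u - A *v u" using Mv by simp
  have n1: "one \<bullet> one = real CARD('n)" unfolding one_def by (simp add: inner_vec_def)
  have nA: "one \<bullet> (A *v one) = 2 * real (num_edges E)"
  proof -
    have "one \<bullet> (A *v one) = (\<Sum>i\<in>UNIV. \<Sum>j\<in>UNIV. if E i j then 1 else 0)"
      unfolding one_def A_def adj_matrix_def by (simp add: inner_vec_def matrix_vector_mult_def)
    also have "\<dots> = (\<Sum>p\<in>(UNIV::'n set) \<times> (UNIV::'n set). if E (fst p) (snd p) then (1::real) else 0)"
      by (simp add: sum.cartesian_product case_prod_beta)
    also have "\<dots> = (\<Sum>p\<in>{p\<in>UNIV. E (fst p) (snd p)}. (1::real))"
      unfolding UNIV_Times_UNIV by (rule sum.inter_filter[symmetric]) simp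
    also have "{p\<in>UNIV. E (fst p) (snd p)} = {(i, j). E i j}" by auto
    also have "(\<Sum>p\<in>{(i, j). E i j}. (1::real)) = real (card {(i, j). E i j})" by simp
    finally show ?thesis using card_pairs[OF assms(1)] by simp
  qed
  define a where "a = u \<bullet> u"
  define b where "b = u \<bullet> (A *v u)"
  define c where "c = (A *v u) \<bullet> (A *v u)"
  define e where "e = (A *v u) \<bullet> (A *v (A *v u))"
  have s1: "(A *v u) \<bullet> u = b" unfolding b_def by (simp add: inner_commute)
  have s2: "u \<bullet> (A *v (A *v u)) = c" unfolding c_def using sym_dot[OF sym] by simp
  have s3: "(A *v (A *v u)) \<bullet> u = c" using s2 by (simp add: inner_commute)
  have s4: "(A *v (A *v u)) \<bullet> (A *v u) = e" unfolding e_def by (simp add: inner_commute)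
  have q1: "one \<bullet> u = x * a - b" unfolding one_eq a_def
    using s1 by (simp add: inner_diff_left)
  have q2: "one \<bullet> one = x*x*a - 2*x*b + c" unfolding one_eq a_def c_def
    using s1 by (simp add: inner_diff_left inner_diff_right algebra_simps inner_commute)
  have q3: "one \<bullet> (A *v one) = x*x*b - 2*x*c + e" unfolding one_eq b_def
    using s2 s3 s4 c_def[symmetric] e_def[symmetric] by (simp add: inner_diff_left inner_diff_right matrix_vector_mult_diff_distrib mv_scaleR algebra_simps)
  define w where "w = L *\<^sub>R u - A *v u"
  have q4: "w \<bullet> w = L*L*a - 2*L*b + c" unfolding w_def a_def c_def
    using s1 by (simp add: inner_diff_left inner_diff_right algebra_simps inner_commute)
  have q5: "w \<bullet> (A *v w) = L*L*b - 2*L*c + e" unfolding w_def b_def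
    using s2 s3 s4 c_def[symmetric] e_def[symmetric] by (simp add: inner_diff_left inner_diff_right matrix_vector_mult_diff_distrib mv_scaleR algebra_simps)
  have h1: "- L * (w \<bullet> w) \<le> w \<bullet> (A *v w)" by (rule sf(2))
  have h2: "c \<le> L\<^sup>2 * a" unfolding c_def a_def by (rule sf(3))
  have h3: "(x - L) * (L*L*a - c) \<ge> 0" using h2 xL by (simp add: power2_eq_square)
  have key: "(x*x - L*L) * (x * a - b) \<le> x * (one \<bullet> one) + one \<bullet> (A *v one)"
  proof -
    have "x * (one \<bullet> one) + one \<bullet> (A *v one) - (x*x - L*L) * (x * a - b)
        = (x - L) * (L*L*a - c) + (L * (w \<bullet> w) + w \<bullet> (A *v w))"
      unfolding q2 q3 q4 q5 by (simp add: algebra_simps)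
    then show ?thesis using h1 h3 by linarith
  qed
  have npos: "real CARD('n) > 0" by simp
  have rhs: "real CARD('n) * (x + avg_degree E) = x * (one \<bullet> one) + one \<bullet> (A *v one)"
    unfolding n1 nA avg_degree_def using npos by (simp add: field_simps)
  have den: "x\<^sup>2 - L\<^sup>2 > 0" using xL sf(1)
    by (simp add: power2_eq_square) (metis mult_strict_mono' less_le_trans order.strict_implies_order)
  show ?thesis unfolding L_def[symmetric] rhs wg q1
    using key den by (simp add: pos_le_divide_eq power2_eq_square mult.commute)
qed

end
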